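(* Assume the Setup and Matrix Notation below. For all $i,j\in I$ let $Z_{ij}=\begin{pmatrix}P_{ij}&Q_{ij}\\R_{ij}&S_{ij}\end{pmatrix}$ be $r\times r$ matrices over $\mathcal O_X(U_i\cap U_j)$ (blocks of sizes $(r-2)\times(r-2)$, $(r-2)\times2$, $2\times(r-2)$, $2\times2$) with $M_i=Z_{ij}M_j$ and $S_{ij}=(-1)^{t_j}s_{jt_i}A_{ij}$. Then for any $i,j,k\in I$ there exist regular functions $\beta_{ijk1},\dots,\beta_{ijk,r-1}$ on $U_i\cap U_j\cap U_k$ such that $Z_{ik}-Z_{ij}Z_{jk}=(0\ \ B_{ijk})$, where $0$ is the zero $r\times(r-2)$ matrix and $$B_{ijk}=\begin{pmatrix}Q_{ik}-P_{ij}Q_{jk}-Q_{ij}S_{jk}\\ S_{ik}-R_{ij}Q_{jk}-S_{ij}S_{jk}\end{pmatrix}=\begin{pmatrix}\beta_{ijk1}\\ \vdots\\ \widehat{\beta_{ijkt_i}}\\ \vdots\\ \beta_{ijk,r-1}\\ \beta_{ijkt_i}f_i\\ \beta_{ijkt_i}g_i\end{pmatrix}(g_k,\ -f_k),$$ the hat meaning that the entry $\beta_{ijkt_i}$ is omitted from the first $r-2$ entries.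
   Context: Setup. $k$ is an algebraically closed field, $X$ a smooth irreducible algebraic variety over $k$, $Y\subset X$ a local complete intersection subscheme of codimension two with ideal sheaf $\mathcal J$ and normal bundle $N$, $L$ a line bundle on $X$, $r\ge 2$ an integer, and $s_1,\dots,s_{r-1}$ global sections generating $\bigwedge^2N\otimes L^*|_Y$. A bar denotes the class modulo the ideal of $Y$. $\{U_i\}_{i\in I}$ is a cover of $X$ by affine open sets such that: (a) $L|_{U_i}$ is trivial, with transition functions $h_{ij}\in\mathcal O_X(U_i\cap U_j)^\times$, $h_{ij}h_{jk}=h_{ik}$; (b) $f_i,g_i\in\mathcal O_X(U_i)$ generate $\mathcal J(U_i)$ (with $f_i=1,g_i=0$ if $Y\cap U_i=\emptyset$), and for every affine open $V\subseteq U_i$ and $u,v\in\mathcal O_X(V)$ with $uf_i=vg_i$ there is $w\in\mathcal O_X(V)$ with $u=wg_i$, $v=wf_i$; (c) for all $i,j$, $A_{ij}$ is a $2\times2$ matrix over $\mathcal O_X(U_i\cap U_j)$ with $(f_i,g_i)^T=A_{ij}(f_j,g_j)^T$; (d) $s_{it}\in\mathcal O_X(U_i)$ ($t=1,\dots,r-1$) satisfy $\bar s_{it}=\frac{\det\bar A_{ij}}{\bar h_{ij}}\bar s_{jt}$ on $Y\cap U_i\cap U_j$ (they represent $s_t$ locally); (e) there are indices $t_i\in\{1,\dots,r-1\}$ with $s_{it_i}=(-1)^{t_i}$, and for all $i,j$ the function $s_{jt_i}$ is a unit on $U_i\cap U_j$ and $\det A_{ij}=(-1)^{t_i}h_{ij}/s_{jt_i}$.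 Matrix Notation. $\Delta_t$ is the identity matrix (size clear from context) with its $t$-th row removed and $\Delta'_t$ its transpose; thus $\Delta_tM$ is $M$ without its $t$-th row and $M\Delta'_t$ is $M$ without its $t$-th column. $\mathbf s_i=(s_{i1},\dots,s_{i,r-1})^T$. $T'_i$ is the $(r-1)\times(r-1)$ matrix equal to the identity except for its $t_i$-th column, whose $t_i$-th entry is $1$ and whose $t$-th entry is $-(-1)^{t_i}s_{it}$ for $t\ne t_i$. $T''_i$ is the $2\times(r-1)$ matrix whose $t_i$-th column is $(f_i,g_i)^T$ and whose other columns are zero. $M_i=\begin{pmatrix}\Delta_{t_i}T'_i\\ T''_i\end{pmatrix}$ (an $r\times(r-1)$ matrix). $P_{ij}=\Delta_{t_i}T'_i\Delta'_{t_j}$. *)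

theory Defs
  imports "Jordan_Normal_Form.Matrix" "Jordan_Normal_Form.Determinant"
    "HOL-Computational_Algebra.Polynomial"
begin

text \<open>X is a variety over the field k, so regular functions on an open set are
  determined by their values at points; they are modelled as functions
  'x => 'k considered on the open set.  Aff is the family of affine open
  subsets of X and Reg V is the k-algebra of regular functions on V.
  The axioms below are properties of every (separated) variety: regular
  functions on an affine open form a k-algebra containing the constants,
  they restrict to smaller affine opens, and intersections of affine opens
  are affine.\<close>

definition regular_structure ::
  "'x set set \<Rightarrow> ('x set \<Rightarrow> ('x \<Rightarrow> 'k::field) set) \<Rightarrow> bool" where
  "regular_structure Aff Reg \<longleftrightarrow>
     (\<forall>V\<in>Aff. \<forall>W\<in>Aff. V \<inter> W \<in> Aff) \<and>
     (\<forall>V\<in>Aff. \<forall>c. (\<lambda>_. c) \<in> Reg V) \<and>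
     (\<forall>V\<in>Aff. \<forall>u\<in>Reg V. \<forall>v\<in>Reg V. (\<lambda>x. u x + v x) \<in> Reg V) \<and>
     (\<forall>V\<in>Aff. \<forall>u\<in>Reg V. \<forall>v\<in>Reg V. (\<lambda>x. u x * v x) \<in> Reg V) \<and>
     (\<forall>V\<in>Aff. \<forall>u\<in>Reg V. (\<lambda>x. - u x) \<in> Reg V) \<and>
     (\<forall>V\<in>Aff. \<forall>u\<in>Reg V. \<forall>u'. (\<forall>x\<in>V. u' x = u x) \<longrightarrow> u' \<in> Reg V) \<and>
     (\<forall>V\<in>Aff. \<forall>W\<in>Aff. V \<subseteq> W \<longrightarrow> (\<forall>u\<in>Reg W. u \<in> Reg V))"

definition reg_unit :: "('x set \<Rightarrow> ('x \<Rightarrow> 'k::field) set) \<Rightarrow> 'x set \<Rightarrow> ('x \<Rightarrow> 'k) \<Rightarrow> bool" where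
  "reg_unit Reg V u \<longleftrightarrow> u \<in> Reg V \<and> (\<exists>w\<in>Reg V. \<forall>x\<in>V. u x * w x = 1)"

definition reg_mat ::
  "('x set \<Rightarrow> ('x \<Rightarrow> 'k::field) set) \<Rightarrow> 'x set \<Rightarrow> nat \<Rightarrow> nat \<Rightarrow> ('x \<Rightarrow> 'k mat) \<Rightarrow> bool" where
  "reg_mat Reg V m n A \<longleftrightarrow> (\<forall>x\<in>V. A x \<in> carrier_mat m n) \<and>
     (\<forall>a<m. \<forall>b<n. (\<lambda>x. A x $$ (a, b)) \<in> Reg V)"

section \<open>Matrix notation (indices t are 1-based as in the paper)\<close>

text \<open>Delta n t: the n x n identity matrix with its t-th row removed.\<close>
definition Delta :: "nat \<Rightarrow> nat \<Rightarrow> 'a::{zero,one} mat" where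
  "Delta n t = mat (n - 1) n (\<lambda>(a, b). if b = (if a + 1 < t then a else a + 1) then 1 else 0)"

definition Delta' :: "nat \<Rightarrow> nat \<Rightarrow> 'a::{zero,one} mat" where
  "Delta' n t = transpose_mat (Delta n t)"

definition append_cols :: "'a::zero mat \<Rightarrow> 'a mat \<Rightarrow> 'a mat" where
  "append_cols A B = four_block_mat A B (0\<^sub>m 0 (dim_col A)) (0\<^sub>m 0 (dim_col B))"

definition col2 :: "'a \<Rightarrow> 'a \<Rightarrow> 'a mat" where
  "col2 a b = mat 2 1 (\<lambda>(p, _). if p = 0 then a else b)"
definition row2 :: "'a \<Rightarrow> 'a \<Rightarrow> 'a mat" where
  "row2 a b = mat 1 2 (\<lambda>(_, q). if q = 0 then a else b)"

text \<open>Column vector (v_1,...,v_n)^T from a 1-based sequence v.\<close>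
definition colvec :: "nat \<Rightarrow> (nat \<Rightarrow> 'a) \<Rightarrow> 'a mat" where
  "colvec n v = mat n 1 (\<lambda>(p, _). v (p + 1))"

text \<open>T'_i (size (r-1)x(r-1)), given r, t_i and the values s_{i,1..r-1}:
  identity except its t_i-th column, whose t_i-th entry is 1 and whose
  t-th entry is -(-1)^{t_i} s_{it} for t \<noteq> t_i.\<close>
definition Tprime :: "nat \<Rightarrow> nat \<Rightarrow> (nat \<Rightarrow> 'a::comm_ring_1) \<Rightarrow> 'a mat" where
  "Tprime r ti s = mat (r - 1) (r - 1) (\<lambda>(a, b).
      if b + 1 = ti then (if a + 1 = ti then 1 else - ((-1) ^ ti * s (a + 1)))
      else (if a = b then 1 else 0))"

definition Tsecond :: "nat \<Rightarrow> nat \<Rightarrow> 'a::zero \<Rightarrow> 'a \<Rightarrow> 'a mat" where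
  "Tsecond r ti f g = mat 2 (r - 1) (\<lambda>(a, b).
      if b + 1 = ti then (if a = 0 then f else g) else 0)"

definition Mmat :: "nat \<Rightarrow> nat \<Rightarrow> (nat \<Rightarrow> 'a::comm_ring_1) \<Rightarrow> 'a \<Rightarrow> 'a \<Rightarrow> 'a mat" where
  "Mmat r ti s f g = (Delta (r - 1) ti * Tprime r ti s) @\<^sub>r Tsecond r ti f g"

end

theory Submission
  imports Defs
begin


lemma det2: assumes "(A::'a::comm_ring_1 mat) \<in> carrier_mat 2 2"
  shows "det A = A$$(0,0) * A$$(1,1) - A$$(0,1) * A$$(1,0)"
proof -
  have "det A = (\<Sum>j<2. A $$ (0, j) * cofactor A 0 j)"
    by (rule laplace_expansion_row[OF assms], simp)
  also have "\<dots> = A $$ (0, 0) * cofactor A 0 0 + A $$ (0, 1) * cofactor A 0 1"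
    by (simp add: numeral_2_eq_2)
  also have "cofactor A 0 0 = A$$(1,1)"
    unfolding cofactor_def using assms
    by (subst det_single, auto simp: mat_delete_def)
  also have "cofactor A 0 1 = - A$$(1,0)"
    unfolding cofactor_def using assms
    by (subst det_single, auto simp: mat_delete_def)
  finally show ?thesis by (simp add: algebra_simps)
qed

lemma mult_entry:
  assumes "A \<in> carrier_mat m n" "B \<in> carrier_mat n p" "a < m" "b < p"
  shows "(A * B) $$ (a, b) = (\<Sum>l<n. A $$ (a, l) * B $$ (l, b))"
  using assms by (simp add: scalar_prod_def atLeast0LessThan)

lemma append_rows_entry:
  assumes "A \<in> carrier_mat n1 c" "B \<in> carrier_mat n2 c" "a < n1 + n2" "b < c"
  shows "(A @\<^sub>r B) $$ (a, b) = (if a < n1 then A $$ (a, b) else B $$ (a - n1, b))"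
  using assms by (simp add: append_rows_def)

lemma Delta_carrier: "Delta n t \<in> carrier_mat (n - 1) n"
  by (simp add: Delta_def)

lemma Delta_entry: "a < n - 1 \<Longrightarrow> b < n \<Longrightarrow>
  Delta n t $$ (a, b) = (if b = (if a + 1 < t then a else a + 1) then 1 else 0)"
  by (simp add: Delta_def)

lemma Tprime_carrier: "Tprime r t s \<in> carrier_mat (r - 1) (r - 1)"
  by (simp add: Tprime_def)

lemma Tsecond_carrier: "Tsecond r t f g \<in> carrier_mat 2 (r - 1)"
  by (simp add: Tsecond_def)

lemma sum_delta_mult: "b < (n::nat) \<Longrightarrow> (\<Sum>l<n. (if b = l then 1 else 0) * (F l :: 'a::semiring_1)) = F b"
proof -
  assume b: "b < n"
  have "(\<Sum>l<n. (if b = l then 1 else 0) * F l) = (\<Sum>l<n. if l = b then F l else 0)"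
    by (rule sum.cong) auto
  also have "\<dots> = F b" using b by simp
  finally show ?thesis .
qed

lemma DT_entry:
  assumes "a < n" "q < n + 1" and that: "T \<in> carrier_mat (n+1) (n+1)"
  shows "(Delta (n+1) t * (T :: 'a::comm_ring_1 mat)) $$ (a, q) = T $$ ((if a + 1 < t then a else a + 1), q)"
proof -
  have "(Delta (n+1) t * T) $$ (a, q) = (\<Sum>l<n+1. Delta (n+1) t $$ (a, l) * T $$ (l, q))"
    using Delta_carrier[of "n+1" t] that assms by (intro mult_entry) auto
  also have "\<dots> = (\<Sum>l<n+1. (if (if a + 1 < t then a else a + 1) = l then 1 else 0) * T $$ (l, q))"
    using assms by (intro sum.cong) (auto simp: Delta_entry)
  also have "\<dots> = T $$ ((if a + 1 < t then a else a + 1), q)"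
    using assms by (intro sum_delta_mult) auto
  finally show ?thesis .
qed

lemma Mmat_carrier: "Mmat (n+2) t s f g \<in> carrier_mat (n+2) (n+1)"
proof -
  have "Delta (n+1) t * Tprime (n+2) t s \<in> carrier_mat n (n+1)"
    using Delta_carrier[of "n+1" t] Tprime_carrier[of "n+2" t s] by (intro mult_carrier_mat) auto
  thus ?thesis unfolding Mmat_def using Tsecond_carrier[of "n+2" t f g]
    by (metis add.commute add_2_eq_Suc' add_diff_cancel_left' carrier_append_rows diff_Suc_1 plus_1_eq_Suc)
qed

lemma Mmat_entry:
  assumes "l < n + 2" "q < n + 1"
  shows "Mmat (n+2) t s f g $$ (l, q) =
    (if l < n then
       (if q + 1 = t then (if (if l + 1 < t then l else l + 1) + 1 = t then 1
          else - ((-1) ^ t * s ((if l + 1 < t then l else l + 1) + 1)))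
        else (if (if l + 1 < t then l else l + 1) = q then 1 else 0))
     else (if q + 1 = t then (if l = n then f else g) else 0))"
proof -
  have DT: "Delta (n+1) t * Tprime (n+2) t s \<in> carrier_mat n (n+1)"
    using Delta_carrier[of "n+1" t] Tprime_carrier[of "n+2" t s] by (intro mult_carrier_mat) auto
  have "Mmat (n+2) t s f g $$ (l, q) = (if l < n then (Delta (n+1) t * Tprime (n+2) t s) $$ (l, q)
        else Tsecond (n+2) t f g $$ (l - n, q))"
    unfolding Mmat_def using assms Tsecond_carrier[of "n+2" t f g] DT
    by (subst append_rows_entry[of _ n "n+1" _ 2]) auto
  also have "\<dots> = (if l < n then Tprime (n+2) t s $$ ((if l + 1 < t then l else l + 1), q)
        else Tsecond (n+2) t f g $$ (l - n, q))"
    using assms Tprime_carrier[of "n+2" t s] DT_entry[of l n q "Tprime (n+2) t s" t] by simp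
  finally show ?thesis using assms by (auto simp: Tprime_def Tsecond_def)
qed

lemma Mmat_col:
  assumes "1 \<le> t" "t \<le> n + 1" "p < n" "l < n + 2"
  shows "Mmat (n+2) t s f g $$ (l, (if p + 1 < t then p else p + 1)) = (if l = p then 1 else 0)"
  using assms by (subst Mmat_entry) auto

lemma Mmat_last:
  assumes "1 \<le> t" "t \<le> n + 1"
  shows "Mmat (n+2) t s f g $$ (n, t - 1) = f" "Mmat (n+2) t s f g $$ (n+1, t - 1) = g"
  using assms by (subst Mmat_entry; auto)+

lemma Mmat_low:
  assumes "p < 2" "q < n + 1"
  shows "Mmat (n+2) t s f g $$ (n + p, q) = (if q + 1 = t then (if p = 0 then f else g) else 0)"
  using assms by (subst Mmat_entry) auto

lemma col_lemma:
  assumes "Z \<in> carrier_mat (n+2) (n+2)" "a < n+2" "p < n" "1 \<le> t" "t \<le> n+1"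
  shows "(Z * Mmat (n+2) t s f g) $$ (a, (if p + 1 < t then p else p + 1)) = Z $$ (a, p)"
proof -
  have "(Z * Mmat (n+2) t s f g) $$ (a, (if p + 1 < t then p else p + 1))
     = (\<Sum>l<n+2. Z $$ (a, l) * Mmat (n+2) t s f g $$ (l, (if p + 1 < t then p else p + 1)))"
    using assms Mmat_carrier[of n t s f g] by (intro mult_entry[of _ "n+2" "n+2" _ "n+1"]) auto
  also have "\<dots> = (\<Sum>l<n+2. (if p = l then 1 else 0) * Z $$ (a, l))"
    apply (intro sum.cong refl)
    subgoal for l using Mmat_col[OF assms(4,5,3), of l s f g] by auto
    done
  also have "\<dots> = Z $$ (a, p)" using assms by (intro sum_delta_mult) auto
  finally show ?thesis .
qed


lemma zero_cols:
  assumes Z: "Zik \<in> carrier_mat (n+2) (n+2)" "Zij \<in> carrier_mat (n+2) (n+2)" "Zjk \<in> carrier_mat (n+2) (n+2)"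
    and Mj: "Mj \<in> carrier_mat (n+2) (n+1)"
    and e1: "Mi = Zik * Mmat (n+2) tk sk fk gk" and e2: "Mi = Zij * Mj"
    and e3: "Mj = Zjk * Mmat (n+2) tk sk fk gk"
    and t: "1 \<le> tk" "tk \<le> n+1" and a: "a < n+2" and p: "p < n"
  shows "Zik $$ (a,p) = (Zij * Zjk) $$ (a,p)"
proof -
  let ?d = "if p + 1 < tk then p else p + 1"
  let ?M = "Mmat (n+2) tk sk fk gk"
  have "Zik $$ (a,p) = (Zik * ?M) $$ (a, ?d)" using col_lemma[OF Z(1) a p t] by simp
  also have "\<dots> = (Zij * (Zjk * ?M)) $$ (a, ?d)" using e1 e2 e3 by simp
  also have "Zij * (Zjk * ?M) = (Zij * Zjk) * ?M"
    using Z Mmat_carrier[of n tk sk fk gk] by (subst assoc_mult_mat) auto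
  also have "((Zij * Zjk) * ?M) $$ (a, ?d) = (Zij * Zjk) $$ (a,p)"
    using Z by (intro col_lemma[OF _ a p t]) auto
  finally show ?thesis .
qed

lemma block_entry:
  assumes c: "Pik \<in> carrier_mat n n" "Qik \<in> carrier_mat n 2" "Rik \<in> carrier_mat 2 n" "Sik \<in> carrier_mat 2 2"
    "Pij \<in> carrier_mat n n" "Qij \<in> carrier_mat n 2" "Rij \<in> carrier_mat 2 n" "Sij \<in> carrier_mat 2 2"
    "Pjk \<in> carrier_mat n n" "Qjk \<in> carrier_mat n 2" "Rjk \<in> carrier_mat 2 n" "Sjk \<in> carrier_mat 2 2"
    and a: "a < n+2" and q: "q < 2"
  shows "(four_block_mat Pik Qik Rik Sik - four_block_mat Pij Qij Rij Sij * four_block_mat Pjk Qjk Rjk Sjk) $$ (a, n+q)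
     = (((Qik :: 'a::comm_ring_1 mat) - Pij * Qjk - Qij * Sjk) @\<^sub>r (Sik - Rij * Qjk - Sij * Sjk)) $$ (a,q)"
proof -
  have prod: "four_block_mat Pij Qij Rij Sij * four_block_mat Pjk Qjk Rjk Sjk =
     four_block_mat (Pij * Pjk + Qij * Rjk) (Pij * Qjk + Qij * Sjk) (Rij * Pjk + Sij * Rjk) (Rij * Qjk + Sij * Sjk)"
    using c by (intro mult_four_block_mat) auto
  have B1: "Qik - Pij * Qjk - Qij * Sjk \<in> carrier_mat n 2" using c by auto
  have B2: "Sik - Rij * Qjk - Sij * Sjk \<in> carrier_mat 2 2" using c by auto
  show ?thesis
    unfolding prod
    using a q c B1 B2 by (subst append_rows_entry[OF B1 B2]) auto
qed


lemma kernel_row: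
  assumes Z: "Zik \<in> carrier_mat (n+2) (n+2)" "Zij \<in> carrier_mat (n+2) (n+2)" "Zjk \<in> carrier_mat (n+2) (n+2)"
    and Mj: "Mj \<in> carrier_mat (n+2) (n+1)"
    and e1: "Mi = Zik * Mmat (n+2) tk sk fk gk" and e2: "Mi = Zij * Mj"
    and e3: "Mj = Zjk * Mmat (n+2) tk sk fk gk"
    and t: "1 \<le> tk" "tk \<le> n+1" and a: "a < n+2"
    and z: "\<And>l. l < n \<Longrightarrow> (Zik - Zij * Zjk) $$ (a, l) = 0"
  shows "(Zik - Zij * Zjk) $$ (a, n) * fk + (Zik - Zij * Zjk) $$ (a, n+1) * gk = 0"
proof -
  let ?M = "Mmat (n+2) tk sk fk gk"
  let ?D = "Zik - Zij * Zjk"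
  have ZZ: "Zij * Zjk \<in> carrier_mat (n+2) (n+2)" using Z by auto
  have D: "?D \<in> carrier_mat (n+2) (n+2)" using Z by auto
  have M: "?M \<in> carrier_mat (n+2) (n+1)" by (rule Mmat_carrier)
  have "?D * ?M = Zik * ?M - (Zij * Zjk) * ?M"
    using Z ZZ M by (intro minus_mult_distrib_mat) auto
  also have "(Zij * Zjk) * ?M = Zij * (Zjk * ?M)" using Z M by (intro assoc_mult_mat) auto
  also have "Zik * ?M - Zij * (Zjk * ?M) = 0\<^sub>m (n+2) (n+1)"
    using e1 e2 e3 Z M by (intro eq_matI) auto
  finally have DM: "?D * ?M = 0\<^sub>m (n+2) (n+1)" .
  have "(?D * ?M) $$ (a, tk - 1) = (\<Sum>l<n+2. ?D $$ (a, l) * ?M $$ (l, tk - 1))"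
    using D M a t by (intro mult_entry) auto
  also have "\<dots> = (\<Sum>l<n. ?D $$ (a, l) * ?M $$ (l, tk - 1)) + ?D $$ (a, n) * ?M $$ (n, tk - 1)
        + ?D $$ (a, n+1) * ?M $$ (n+1, tk - 1)"
    by (simp add: numeral_2_eq_2)
  also have "(\<Sum>l<n. ?D $$ (a, l) * ?M $$ (l, tk - 1)) = 0" using z by simp
  also have "?M $$ (n, tk - 1) = fk" using Mmat_last[OF t] by simp
  also have "?M $$ (n+1, tk - 1) = gk" using Mmat_last[OF t] by simp
  finally show ?thesis using DM a t by simp
qed

lemma R_rel:
  assumes Zij: "Zij \<in> carrier_mat (n+2) (n+2)"
    and e2: "Mmat (n+2) ti si fi gi = Zij * Mmat (n+2) tj sj fj gj"
    and t: "1 \<le> tj" "tj \<le> n+1" and m: "m < n" and p: "p < 2"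
  shows "Zij $$ (n + p, m) = (if (if m + 1 < tj then m else m + 1) + 1 = ti then (if p = 0 then fi else gi) else 0)"
proof -
  have "Zij $$ (n + p, m) = (Zij * Mmat (n+2) tj sj fj gj) $$ (n + p, (if m + 1 < tj then m else m + 1))"
    using col_lemma[OF Zij _ m t, of "n+p"] p by simp
  also have "\<dots> = Mmat (n+2) ti si fi gi $$ (n + p, (if m + 1 < tj then m else m + 1))"
    using e2 by simp
  finally show ?thesis using Mmat_low[OF p, of "(if m + 1 < tj then m else m + 1)" n ti si fi gi] m t by simp
qed


lemma mult22:
  assumes "A \<in> carrier_mat 2 2" "B \<in> carrier_mat 2 2" "p < 2" "q < 2"
  shows "(A * B) $$ (p, q) = A $$ (p, 0) * B $$ (0, q) + A $$ (p, 1) * (B $$ (1, q) :: 'a::comm_ring_1)"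
  using assms by (subst mult_entry[of _ 2 2 _ 2]) (auto simp: numeral_2_eq_2)

lemma col2_carrier: "col2 a b \<in> carrier_mat 2 1"
  by (simp add: col2_def)

lemma col2_trans:
  assumes A: "A \<in> carrier_mat 2 2" and e: "col2 a b = A * col2 c (d :: 'a::comm_ring_1)"
  shows "a = A $$ (0,0) * c + A $$ (0,1) * d" "b = A $$ (1,0) * c + A $$ (1,1) * d"
proof -
  have "col2 a b $$ (0,0) = (A * col2 c d) $$ (0,0)" "col2 a b $$ (1,0) = (A * col2 c d) $$ (1,0)"
    using e by simp_all
  moreover have "(A * col2 c d) $$ (p,0) = A $$ (p,0) * c + A $$ (p,1) * d" if "p < 2" for p
    using A that col2_carrier[of c d]
    by (subst mult_entry[of _ 2 2 _ 1]) (auto simp: numeral_2_eq_2 col2_def)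
  ultimately show "a = A $$ (0,0) * c + A $$ (0,1) * d" "b = A $$ (1,0) * c + A $$ (1,1) * d"
    by (auto simp: col2_def)
qed

lemma koszul:
  assumes A: "A \<in> carrier_mat 2 2" and e: "col2 fi gi = A * col2 fk (gk :: 'a::comm_ring_1)" and q: "q < 2"
  shows "gi * A $$ (0,q) - fi * A $$ (1,q) = det A * (if q = 0 then gk else - fk)"
proof -
  note c = col2_trans[OF A e]
  have "q = 0 \<or> q = 1" using q by auto
  thus ?thesis unfolding det2[OF A] c by (auto simp: algebra_simps)
qed

lemma S_ident:
  fixes fi gi fj gj fk gk :: "'a::field"
  assumes A: "Aik \<in> carrier_mat 2 2" "Aij \<in> carrier_mat 2 2" "Ajk \<in> carrier_mat 2 2"
    and Rij: "Rij \<in> carrier_mat 2 n" and Qjk: "Qjk \<in> carrier_mat n 2"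
    and eik: "col2 fi gi = Aik * col2 fk gk" and eij: "col2 fi gi = Aij * col2 fj gj"
    and ejk: "col2 fj gj = Ajk * col2 fk gk"
    and Sik: "Sik = sik \<cdot>\<^sub>m Aik" and Sij: "Sij = sij \<cdot>\<^sub>m Aij" and Sjk: "Sjk = sjk \<cdot>\<^sub>m Ajk"
    and scal: "sik * det Aik = sij * sjk * (det Aij * det Ajk)"
    and R: "\<And>m. m < n \<Longrightarrow> gi * Rij $$ (0, m) = fi * Rij $$ (1, m)"
    and q: "q < 2"
  shows "gi * (Sik - Rij * Qjk - Sij * Sjk) $$ (0, q) - fi * (Sik - Rij * Qjk - Sij * Sjk) $$ (1, q) = 0"
proof -
  have AA: "Aij * Ajk \<in> carrier_mat 2 2" using A by auto
  have eAA: "col2 fi gi = (Aij * Ajk) * col2 fk gk"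
    using eij ejk A col2_carrier[of fk gk] by (subst assoc_mult_mat) auto
  have N: "(Sik - Rij * Qjk - Sij * Sjk) $$ (p, q) = sik * Aik $$ (p,q) - (Rij * Qjk) $$ (p,q) - sij * sjk * (Aij * Ajk) $$ (p,q)"
    if p: "p < 2" for p
  proof -
    have "(Sij * Sjk) $$ (p, q) = sij * sjk * (Aij * Ajk) $$ (p,q)"
      using A p q mult22[of "sij \<cdot>\<^sub>m Aij" "sjk \<cdot>\<^sub>m Ajk" p q] mult22[of Aij Ajk p q]
      unfolding Sij Sjk by (auto simp: algebra_simps)
    thus ?thesis using A p q Rij Qjk unfolding Sik Sij Sjk by simp
  qed
  have RQ: "gi * (Rij * Qjk) $$ (0,q) - fi * (Rij * Qjk) $$ (1,q) = 0"
  proof -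
    have "gi * (Rij * Qjk) $$ (0,q) - fi * (Rij * Qjk) $$ (1,q)
       = (\<Sum>l<n. (gi * Rij $$ (0, l) - fi * Rij $$ (1, l)) * Qjk $$ (l, q))"
    proof -
      have e0: "(Rij * Qjk) $$ (0,q) = (\<Sum>l<n. Rij $$ (0, l) * Qjk $$ (l, q))"
        using q by (intro mult_entry[OF Rij Qjk]) auto
      have e1: "(Rij * Qjk) $$ (1,q) = (\<Sum>l<n. Rij $$ (1, l) * Qjk $$ (l, q))"
        using q by (intro mult_entry[OF Rij Qjk]) auto
      show ?thesis unfolding e0 e1
        by (simp add: sum_distrib_left sum_subtractf algebra_simps)
    qed
    also have "\<dots> = 0" using R by simp
    finally show ?thesis .
  qed
  have k1: "gi * Aik $$ (0,q) - fi * Aik $$ (1,q) = det Aik * (if q = 0 then gk else - fk)"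
    by (rule koszul[OF A(1) eik q])
  have k2: "gi * (Aij * Ajk) $$ (0,q) - fi * (Aij * Ajk) $$ (1,q) = det (Aij * Ajk) * (if q = 0 then gk else - fk)"
    by (rule koszul[OF AA eAA q])
  have dm: "det (Aij * Ajk) = det Aij * det Ajk" using A by (intro det_mult) auto
  have "gi * (Sik - Rij * Qjk - Sij * Sjk) $$ (0, q) - fi * (Sik - Rij * Qjk - Sij * Sjk) $$ (1, q)
     = sik * (gi * Aik $$ (0,q) - fi * Aik $$ (1,q))
       - (gi * (Rij * Qjk) $$ (0,q) - fi * (Rij * Qjk) $$ (1,q))
       - sij * sjk * (gi * (Aij * Ajk) $$ (0,q) - fi * (Aij * Ajk) $$ (1,q))"
    by (simp add: N algebra_simps)
  also have "\<dots> = (sik * det Aik - sij * sjk * (det Aij * det Ajk)) * (if q = 0 then gk else - fk)"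
    unfolding k1 k2 RQ dm by (simp add: algebra_simps)
  also have "\<dots> = 0" using scal by simp
  finally show ?thesis .
qed


lemma scal_ident:
  fixes dik dij djk hik hij hjk a b c :: "'a::field"
  assumes d: "dik = (-1)^ti * hik / a" "dij = (-1)^ti * hij / b" "djk = (-1)^tj * hjk / c"
    and nz: "a \<noteq> 0" "b \<noteq> 0" "c \<noteq> 0" and co: "hij * hjk = hik"
  shows "((-1)^tk * a) * dik = ((-1)^tj * b) * ((-1)^tk * c) * (dij * djk)"
proof -
  have m: "((-1::'a)^tj) * (-1)^tj = 1"
    by (simp flip: power_mult_distrib)
  have e1: "a * dik = (-1)^ti * hik" using d nz by simp
  have e2: "b * dij = (-1)^ti * hij" using d nz by simp
  have e3: "c * djk = (-1)^tj * hjk" using d nz by simp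
  have "((-1)^tj * b) * ((-1)^tk * c) * (dij * djk) = (-1)^tj * (-1)^tk * (b * dij) * (c * djk)"
    by (simp add: ac_simps)
  also have "\<dots> = ((-1)^tj * (-1)^tj) * ((-1)^tk * (-1)^ti * (hij * hjk))"
    unfolding e2 e3 by (simp add: ac_simps)
  also have "\<dots> = (-1)^tk * (a * dik)" unfolding m co e1 by (simp add: ac_simps)
  finally show ?thesis by (simp add: ac_simps)
qed

context
  fixes Aff :: "'x set set" and Reg :: "'x set \<Rightarrow> ('x \<Rightarrow> 'k::field) set"
  assumes rs: "regular_structure Aff Reg"
begin

lemma aff_int: "V \<in> Aff \<Longrightarrow> W \<in> Aff \<Longrightarrow> V \<inter> W \<in> Aff"
  using rs unfolding regular_structure_def by meson
lemma reg_const: "V \<in> Aff \<Longrightarrow> (\<lambda>_. c) \<in> Reg V"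
  using rs unfolding regular_structure_def by meson
lemma reg_add: "V \<in> Aff \<Longrightarrow> u \<in> Reg V \<Longrightarrow> v \<in> Reg V \<Longrightarrow> (\<lambda>x. u x + v x) \<in> Reg V"
  using rs unfolding regular_structure_def by meson
lemma reg_mult: "V \<in> Aff \<Longrightarrow> u \<in> Reg V \<Longrightarrow> v \<in> Reg V \<Longrightarrow> (\<lambda>x. u x * v x) \<in> Reg V"
  using rs unfolding regular_structure_def by meson
lemma reg_neg: "V \<in> Aff \<Longrightarrow> u \<in> Reg V \<Longrightarrow> (\<lambda>x. - u x) \<in> Reg V"
  using rs unfolding regular_structure_def by meson
lemma reg_cong: "V \<in> Aff \<Longrightarrow> u \<in> Reg V \<Longrightarrow> (\<And>x. x \<in> V \<Longrightarrow> u' x = u x) \<Longrightarrow> u' \<in> Reg V"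
  using rs unfolding regular_structure_def by meson
lemma reg_restr: "V \<in> Aff \<Longrightarrow> W \<in> Aff \<Longrightarrow> V \<subseteq> W \<Longrightarrow> u \<in> Reg W \<Longrightarrow> u \<in> Reg V"
  using rs unfolding regular_structure_def by meson
lemma reg_diff: "V \<in> Aff \<Longrightarrow> u \<in> Reg V \<Longrightarrow> v \<in> Reg V \<Longrightarrow> (\<lambda>x. u x - v x) \<in> Reg V"
  using reg_add[of V u "\<lambda>x. - v x"] reg_neg[of V v] by simp
lemma reg_sum:
  assumes V: "V \<in> Aff" and fin: "finite L" and F: "\<And>l. l \<in> L \<Longrightarrow> F l \<in> Reg V"
  shows "(\<lambda>x. \<Sum>l\<in>L. F l x) \<in> Reg V"
  using fin F
proof (induction L rule: finite_induct)
  case empty thus ?case using reg_const[OF V, of 0] by simp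
next
  case (insert l L)
  thus ?case using reg_add[OF V, of "F l" "\<lambda>x. \<Sum>l\<in>L. F l x"] by simp
qed

end



theorem corollary7:
  fixes Aff :: "'x set set"
    and Reg :: "'x set \<Rightarrow> ('x \<Rightarrow> 'k::alg_closed_field) set"
    and I :: "'i set" and U :: "'i \<Rightarrow> 'x set"
    and r :: nat
    and h :: "'i \<Rightarrow> 'i \<Rightarrow> 'x \<Rightarrow> 'k"
    and f g :: "'i \<Rightarrow> 'x \<Rightarrow> 'k"
    and A :: "'i \<Rightarrow> 'i \<Rightarrow> 'x \<Rightarrow> 'k mat"
    and s :: "'i \<Rightarrow> nat \<Rightarrow> 'x \<Rightarrow> 'k"
    and t :: "'i \<Rightarrow> nat"
    and Z P Q R S :: "'i \<Rightarrow> 'i \<Rightarrow> 'x \<Rightarrow> 'k mat"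
  assumes regular: "regular_structure Aff Reg"
    and cover_aff: "\<forall>i\<in>I. U i \<in> Aff"
    and r_ge: "r \<ge> 2"
    \<comment> \<open>(a) transition functions of L\<close>
    and h_unit: "\<forall>i\<in>I. \<forall>j\<in>I. reg_unit Reg (U i \<inter> U j) (h i j)"
    and h_cocycle: "\<forall>i\<in>I. \<forall>j\<in>I. \<forall>k\<in>I. \<forall>x\<in>U i \<inter> U j \<inter> U k. h i j x * h j k x = h i k x"
    \<comment> \<open>(b) local generators of the ideal of Y forming a regular sequence\<close>
    and fg_reg: "\<forall>i\<in>I. f i \<in> Reg (U i) \<and> g i \<in> Reg (U i)"
    and fg_syz: "\<forall>i\<in>I. \<forall>V\<in>Aff. V \<subseteq> U i \<longrightarrow> (\<forall>u\<in>Reg V. \<forall>v\<in>Reg V.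
                   (\<forall>x\<in>V. u x * f i x = v x * g i x) \<longrightarrow>
                   (\<exists>w\<in>Reg V. \<forall>x\<in>V. u x = w x * g i x \<and> v x = w x * f i x))"
    \<comment> \<open>(c) transition matrices\<close>
    and A_reg: "\<forall>i\<in>I. \<forall>j\<in>I. reg_mat Reg (U i \<inter> U j) 2 2 (A i j)"
    and A_trans: "\<forall>i\<in>I. \<forall>j\<in>I. \<forall>x\<in>U i \<inter> U j.
                   col2 (f i x) (g i x) = A i j x * col2 (f j x) (g j x)"
    \<comment> \<open>(d) local representatives of the sections s_t, compatible modulo the ideal of Y\<close>
    and s_reg: "\<forall>i\<in>I. \<forall>ta\<in>{1..r-1}. s i ta \<in> Reg (U i)"
    and s_compat: "\<forall>i\<in>I. \<forall>j\<in>I. \<forall>ta\<in>{1..r-1}. \<exists>a\<in>Reg (U i \<inter> U j). \<exists>b\<in>Reg (U i \<inter> U j).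
                   \<forall>x\<in>U i \<inter> U j. s i ta x - det (A i j x) / h i j x * s j ta x
                                     = a x * f i x + b x * g i x"
    \<comment> \<open>(e) normalisation\<close>
    and t_range: "\<forall>i\<in>I. t i \<in> {1..r-1}"
    and s_norm: "\<forall>i\<in>I. \<forall>x\<in>U i. s i (t i) x = (-1) ^ t i"
    and s_unit: "\<forall>i\<in>I. \<forall>j\<in>I. reg_unit Reg (U i \<inter> U j) (s j (t i))"
    and det_A: "\<forall>i\<in>I. \<forall>j\<in>I. \<forall>x\<in>U i \<inter> U j.
                   det (A i j x) = (-1) ^ t i * h i j x / s j (t i) x"
    \<comment> \<open>the matrices Z_ij with their blocks\<close>
    and Z_reg: "\<forall>i\<in>I. \<forall>j\<in>I. reg_mat Reg (U i \<inter> U j) r r (Z i j)"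
    and blocks: "\<forall>i\<in>I. \<forall>j\<in>I. \<forall>x\<in>U i \<inter> U j.
                   P i j x \<in> carrier_mat (r - 2) (r - 2) \<and> Q i j x \<in> carrier_mat (r - 2) 2 \<and>
                   R i j x \<in> carrier_mat 2 (r - 2) \<and> S i j x \<in> carrier_mat 2 2 \<and>
                   Z i j x = four_block_mat (P i j x) (Q i j x) (R i j x) (S i j x)"
    and P_def: "\<forall>i\<in>I. \<forall>j\<in>I. \<forall>x\<in>U i \<inter> U j.
                   P i j x = Delta (r - 1) (t i) * Tprime r (t i) (\<lambda>ta. s i ta x) * Delta' (r - 1) (t j)"
    and M_trans: "\<forall>i\<in>I. \<forall>j\<in>I. \<forall>x\<in>U i \<inter> U j.
                   Mmat r (t i) (\<lambda>ta. s i ta x) (f i x) (g i x)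
                   = Z i j x * Mmat r (t j) (\<lambda>ta. s j ta x) (f j x) (g j x)"
    and S_def: "\<forall>i\<in>I. \<forall>j\<in>I. \<forall>x\<in>U i \<inter> U j.
                   S i j x = ((-1) ^ t j * s j (t i) x) \<cdot>\<^sub>m A i j x"
  shows "\<forall>i\<in>I. \<forall>j\<in>I. \<forall>k\<in>I. \<exists>\<beta> :: nat \<Rightarrow> 'x \<Rightarrow> 'k.
           (\<forall>ta\<in>{1..r-1}. \<beta> ta \<in> Reg (U i \<inter> U j \<inter> U k)) \<and>
           (\<forall>x\<in>U i \<inter> U j \<inter> U k.
              (let B = (Q i k x - P i j x * Q j k x - Q i j x * S j k x)
                       @\<^sub>r (S i k x - R i j x * Q j k x - S i j x * S j k x)
               in Z i k x - Z i j x * Z j k x = append_cols (0\<^sub>m r (r - 2)) B \<and>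
                  B = ((Delta (r - 1) (t i) * colvec (r - 1) (\<lambda>ta. \<beta> ta x))
                         @\<^sub>r col2 (\<beta> (t i) x * f i x) (\<beta> (t i) x * g i x))
                      * row2 (g k x) (- f k x)))"
proof (intro ballI)
  fix i j k assume i: "i \<in> I" and j: "j \<in> I" and k: "k \<in> I"
  obtain n where rn: "r = n + 2" using r_ge by (metis add.commute le_Suc_ex add_2_eq_Suc)
  note rs = regular
  define V where "V = U i \<inter> U j \<inter> U k"
  have Ui: "U i \<in> Aff" and Uj: "U j \<in> Aff" and Uk: "U k \<in> Aff" using cover_aff i j k by auto
  have Uij: "U i \<inter> U j \<in> Aff" and Ujk: "U j \<inter> U k \<in> Aff" and Uik: "U i \<inter> U k \<in> Aff"
    using aff_int[OF rs] Ui Uj Uk by auto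
  have VA: "V \<in> Aff" unfolding V_def using aff_int[OF rs] Uij Uk by auto
  have Vsub: "V \<subseteq> U i \<inter> U j" "V \<subseteq> U j \<inter> U k" "V \<subseteq> U i \<inter> U k" "V \<subseteq> U i" "V \<subseteq> U k"
    unfolding V_def by auto
  have ti: "1 \<le> t i" "t i \<le> n + 1" using t_range i rn by auto
  have tj: "1 \<le> t j" "t j \<le> n + 1" using t_range j rn by auto
  have tk: "1 \<le> t k" "t k \<le> n + 1" using t_range k rn by auto
  define Bm where "Bm x = (Q i k x - P i j x * Q j k x - Q i j x * S j k x)
                       @\<^sub>r (S i k x - R i j x * Q j k x - S i j x * S j k x)" for x
  have xfacts: "Z i k x - Z i j x * Z j k x = append_cols (0\<^sub>m r (r - 2)) (Bm x) \<and>
     (\<forall>a<n+2. Bm x $$ (a,0) * f k x + Bm x $$ (a,1) * g k x = 0) \<and>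
     (\<forall>q<2. g i x * Bm x $$ (n,q) - f i x * Bm x $$ (n+1,q) = 0) \<and>
     (\<forall>a<n+2. \<forall>q<2. Bm x $$ (a,q) = Z i k x $$ (a, n+q) - (Z i j x * Z j k x) $$ (a, n+q))"
    if x: "x \<in> V" for x
  proof -
    have xij: "x \<in> U i \<inter> U j" and xjk: "x \<in> U j \<inter> U k" and xik: "x \<in> U i \<inter> U k"
      using x Vsub by auto
    note bij = blocks[rule_format, OF i j xij] and bjk = blocks[rule_format, OF j k xjk]
      and bik = blocks[rule_format, OF i k xik]
    have cij: "P i j x \<in> carrier_mat n n" "Q i j x \<in> carrier_mat n 2" "R i j x \<in> carrier_mat 2 n" "S i j x \<in> carrier_mat 2 2"
      using bij rn by auto
    have cjk: "P j k x \<in> carrier_mat n n" "Q j k x \<in> carrier_mat n 2" "R j k x \<in> carrier_mat 2 n" "S j k x \<in> carrier_mat 2 2"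
      using bjk rn by auto
    have cik: "P i k x \<in> carrier_mat n n" "Q i k x \<in> carrier_mat n 2" "R i k x \<in> carrier_mat 2 n" "S i k x \<in> carrier_mat 2 2"
      using bik rn by auto
    have Zij: "Z i j x = four_block_mat (P i j x) (Q i j x) (R i j x) (S i j x)" using bij by simp
    have Zjk: "Z j k x = four_block_mat (P j k x) (Q j k x) (R j k x) (S j k x)" using bjk by simp
    have Zik: "Z i k x = four_block_mat (P i k x) (Q i k x) (R i k x) (S i k x)" using bik by simp
    have Zc: "Z i j x \<in> carrier_mat (n+2) (n+2)" "Z j k x \<in> carrier_mat (n+2) (n+2)" "Z i k x \<in> carrier_mat (n+2) (n+2)"
      unfolding Zij Zjk Zik using cij cjk cik by (auto intro: four_block_carrier_mat)
    let ?Mi = "Mmat (n+2) (t i) (\<lambda>ta. s i ta x) (f i x) (g i x)"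
    let ?Mj = "Mmat (n+2) (t j) (\<lambda>ta. s j ta x) (f j x) (g j x)"
    let ?Mk = "Mmat (n+2) (t k) (\<lambda>ta. s k ta x) (f k x) (g k x)"
    have e1: "?Mi = Z i k x * ?Mk" using M_trans[rule_format, OF i k xik] rn by simp
    have e2: "?Mi = Z i j x * ?Mj" using M_trans[rule_format, OF i j xij] rn by simp
    have e3: "?Mj = Z j k x * ?Mk" using M_trans[rule_format, OF j k xjk] rn by simp
    let ?D = "Z i k x - Z i j x * Z j k x"
    have zc: "?D $$ (a, p) = 0" if "a < n+2" "p < n" for a p
      using zero_cols[OF Zc(3,1,2) Mmat_carrier e1 e2 e3 tk that] that Zc by simp
    have be: "?D $$ (a, n+q) = Bm x $$ (a,q)" if "a < n+2" "q < 2" for a q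
      unfolding Bm_def Zij Zjk Zik by (rule block_entry[OF cik cij cjk that])
    have F1: "?D = append_cols (0\<^sub>m r (r - 2)) (Bm x)"
    proof -
      have B1: "Q i k x - P i j x * Q j k x - Q i j x * S j k x \<in> carrier_mat n 2" using cij cjk cik by auto
      have B2: "S i k x - R i j x * Q j k x - S i j x * S j k x \<in> carrier_mat 2 2" using cij cjk cik by auto
      have Bc: "Bm x \<in> carrier_mat (n+2) 2" unfolding Bm_def by (rule carrier_append_rows[OF B1 B2])
      show ?thesis
      proof (rule eq_matI)
        show "dim_row ?D = dim_row (append_cols (0\<^sub>m r (r - 2)) (Bm x))"
          using Zc Bc rn by (simp add: append_cols_def)
        show "dim_col ?D = dim_col (append_cols (0\<^sub>m r (r - 2)) (Bm x))"
          using Zc Bc rn by (simp add: append_cols_def)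
        fix a c assume a: "a < dim_row (append_cols (0\<^sub>m r (r - 2)) (Bm x))"
          and c: "c < dim_col (append_cols (0\<^sub>m r (r - 2)) (Bm x))"
        have a': "a < n+2" and c': "c < n+2" using a c Bc rn by (auto simp: append_cols_def)
        show "?D $$ (a, c) = append_cols (0\<^sub>m r (r - 2)) (Bm x) $$ (a, c)"
        proof (cases "c < n")
          case True
          thus ?thesis using zc[OF a' True] a' Bc rn by (simp add: append_cols_def)
        next
          case False
          then obtain q where q: "c = n + q" "q < 2" using c' by (metis add_diff_inverse_nat add_less_cancel_left)
          thus ?thesis using be[OF a' q(2)] a' Bc rn by (simp add: append_cols_def)
        qed
      qed
    qed
    have F2: "\<forall>a<n+2. Bm x $$ (a,0) * f k x + Bm x $$ (a,1) * g k x = 0"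
    proof (intro allI impI)
      fix a assume a: "a < n+2"
      have "?D $$ (a, n) * f k x + ?D $$ (a, n+1) * g k x = 0"
        by (rule kernel_row[OF Zc(3,1,2) Mmat_carrier e1 e2 e3 tk a zc[OF a]])
      thus "Bm x $$ (a,0) * f k x + Bm x $$ (a,1) * g k x = 0"
        using be[OF a, of 0] be[OF a, of 1] by simp
    qed
    have F3: "\<forall>q<2. g i x * Bm x $$ (n,q) - f i x * Bm x $$ (n+1,q) = 0"
    proof (intro allI impI)
      fix q :: nat assume q: "q < 2"
      have B1: "Q i k x - P i j x * Q j k x - Q i j x * S j k x \<in> carrier_mat n 2" using cij cjk cik by auto
      have B2: "S i k x - R i j x * Q j k x - S i j x * S j k x \<in> carrier_mat 2 2" using cij cjk cik by auto
      have Bn: "Bm x $$ (n + p, q) = (S i k x - R i j x * Q j k x - S i j x * S j k x) $$ (p, q)" if "p < 2" for p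
        unfolding Bm_def using append_rows_entry[OF B1 B2, of "n+p" q] that q by simp
      have Rr: "g i x * R i j x $$ (0, m) = f i x * R i j x $$ (1, m)" if m: "m < n" for m
      proof -
        have "R i j x $$ (p, m) = Z i j x $$ (n + p, m)" if "p < 2" for p
          unfolding Zij using cij m that by simp
        moreover note R_rel[OF Zc(1) e2 tj m, of 0] R_rel[OF Zc(1) e2 tj m, of 1]
        ultimately show ?thesis by (auto simp: ac_simps)
      qed
      have Ac: "A i k x \<in> carrier_mat 2 2" "A i j x \<in> carrier_mat 2 2" "A j k x \<in> carrier_mat 2 2"
        using A_reg i j k xij xjk xik unfolding reg_mat_def by auto
      have nz: "s k (t i) x \<noteq> 0" "s j (t i) x \<noteq> 0" "s k (t j) x \<noteq> 0"
        using s_unit[rule_format, OF i k] s_unit[rule_format, OF i j] s_unit[rule_format, OF j k] xik xij xjk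
        unfolding reg_unit_def by (metis mult_zero_left zero_neq_one)+
      have scal: "((-1)^t k * s k (t i) x) * det (A i k x) =
          ((-1)^t j * s j (t i) x) * ((-1)^t k * s k (t j) x) * (det (A i j x) * det (A j k x))"
        by (rule scal_ident[OF det_A[rule_format, OF i k xik] det_A[rule_format, OF i j xij]
               det_A[rule_format, OF j k xjk] nz h_cocycle[rule_format, OF i j k]]) (use x V_def in auto)
      have "g i x * (S i k x - R i j x * Q j k x - S i j x * S j k x) $$ (0, q)
          - f i x * (S i k x - R i j x * Q j k x - S i j x * S j k x) $$ (1, q) = 0"
        by (rule S_ident[OF Ac cij(3) cjk(2) A_trans[rule_format, OF i k xik] A_trans[rule_format, OF i j xij]
             A_trans[rule_format, OF j k xjk] S_def[rule_format, OF i k xik] S_def[rule_format, OF i j xij]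
             S_def[rule_format, OF j k xjk] scal Rr q])
      thus "g i x * Bm x $$ (n,q) - f i x * Bm x $$ (n+1,q) = 0"
        using Bn[of 0] Bn[of 1] by simp
    qed
    have F4: "\<forall>a<n+2. \<forall>q<2. Bm x $$ (a,q) = Z i k x $$ (a, n+q) - (Z i j x * Z j k x) $$ (a, n+q)"
      using be Zc by simp
    show ?thesis using F1 F2 F3 F4 by blast
  qed
  have regZ: "(\<lambda>x. Z a b x $$ (p, q)) \<in> Reg V" if "a \<in> I" "b \<in> I" "V \<subseteq> U a \<inter> U b" "p < r" "q < r" for a b p q
  proof -
    have "(\<lambda>x. Z a b x $$ (p, q)) \<in> Reg (U a \<inter> U b)"
      using Z_reg that unfolding reg_mat_def by blast
    moreover have "U a \<inter> U b \<in> Aff" using aff_int[OF rs] cover_aff that by auto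
    ultimately show ?thesis using reg_restr[OF rs VA] that by blast
  qed
  have regB: "(\<lambda>x. Bm x $$ (a, q)) \<in> Reg V" if a: "a < n+2" and q: "q < 2" for a q
  proof (rule reg_cong[OF rs VA])
    show "(\<lambda>x. Z i k x $$ (a, n+q) - (\<Sum>l<n+2. Z i j x $$ (a, l) * Z j k x $$ (l, n+q))) \<in> Reg V"
      using a q rn Vsub
      by (intro reg_diff[OF rs VA] reg_sum[OF rs VA] reg_mult[OF rs VA] regZ i j k) auto
  next
    fix x assume x: "x \<in> V"
    have xij: "x \<in> U i \<inter> U j" and xjk: "x \<in> U j \<inter> U k" using x Vsub by auto
    have Zc: "Z i j x \<in> carrier_mat (n+2) (n+2)" "Z j k x \<in> carrier_mat (n+2) (n+2)"
      using Z_reg i j k xij xjk rn unfolding reg_mat_def by auto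
    show "Bm x $$ (a, q) = Z i k x $$ (a, n+q) - (\<Sum>l<n+2. Z i j x $$ (a, l) * Z j k x $$ (l, n+q))"
      using xfacts[OF x] a q mult_entry[OF Zc, of a "n+q"] by simp
  qed
  have regf: "f a \<in> Reg V" "g a \<in> Reg V" if "a \<in> I" "V \<subseteq> U a" for a
    using fg_reg that reg_restr[OF rs VA, of "U a"] cover_aff by auto
  have syz_k: "\<And>u v. u \<in> Reg V \<Longrightarrow> v \<in> Reg V \<Longrightarrow> (\<forall>x\<in>V. u x * f k x = v x * g k x) \<Longrightarrow>
      \<exists>w\<in>Reg V. \<forall>x\<in>V. u x = w x * g k x \<and> v x = w x * f k x"
    using fg_syz k VA Vsub(5) by blast
  have syz_i: "\<And>u v. u \<in> Reg V \<Longrightarrow> v \<in> Reg V \<Longrightarrow> (\<forall>x\<in>V. u x * f i x = v x * g i x) \<Longrightarrow>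
      \<exists>w\<in>Reg V. \<forall>x\<in>V. u x = w x * g i x \<and> v x = w x * f i x"
    using fg_syz i VA Vsub(4) by blast
  have exc: "\<forall>a\<in>{..<n+2}. \<exists>w. w \<in> Reg V \<and> (\<forall>x\<in>V. Bm x $$ (a,0) = w x * g k x \<and> - Bm x $$ (a,1) = w x * f k x)"
  proof
    fix a assume a: "a \<in> {..<n+2}"
    have "\<exists>w\<in>Reg V. \<forall>x\<in>V. Bm x $$ (a,0) = w x * g k x \<and> - Bm x $$ (a,1) = w x * f k x"
    proof (rule syz_k)
      show "(\<lambda>x. Bm x $$ (a,0)) \<in> Reg V" using regB a by auto
      show "(\<lambda>x. - Bm x $$ (a,1)) \<in> Reg V" using regB a reg_neg[OF rs VA] by auto
      show "\<forall>x\<in>V. Bm x $$ (a,0) * f k x = - Bm x $$ (a,1) * g k x"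
      proof
        fix x assume xV: "x \<in> V"
        have "Bm x $$ (a,0) * f k x + Bm x $$ (a,1) * g k x = 0"
          using conjunct1[OF conjunct2[OF xfacts[OF xV]]] a by blast
        thus "Bm x $$ (a,0) * f k x = - Bm x $$ (a,1) * g k x" by (simp add: eq_neg_iff_add_eq_0)
      qed
    qed
    thus "\<exists>w. w \<in> Reg V \<and> (\<forall>x\<in>V. Bm x $$ (a,0) = w x * g k x \<and> - Bm x $$ (a,1) = w x * f k x)" by blast
  qed
  obtain c where c: "\<And>a. a < n+2 \<Longrightarrow> c a \<in> Reg V"
    "\<And>a x. a < n+2 \<Longrightarrow> x \<in> V \<Longrightarrow> Bm x $$ (a,0) = c a x * g k x"
    "\<And>a x. a < n+2 \<Longrightarrow> x \<in> V \<Longrightarrow> - Bm x $$ (a,1) = c a x * f k x"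
    using bchoice[OF exc] by auto
  define aa where "aa x = g i x * c n x - f i x * c (n+1) x" for x
  have aa_reg: "aa \<in> Reg V" unfolding aa_def
    using regf[OF i Vsub(4)] c(1)[of n] c(1)[of "n+1"]
    by (intro reg_diff[OF rs VA] reg_mult[OF rs VA]) auto
  have aa_g: "aa x * g k x = 0" and aa_f: "aa x * f k x = 0" if x: "x \<in> V" for x
  proof -
    have "g i x * Bm x $$ (n,0) - f i x * Bm x $$ (n+1,0) = 0"
         "g i x * Bm x $$ (n,1) - f i x * Bm x $$ (n+1,1) = 0"
      using conjunct1[OF conjunct2[OF conjunct2[OF xfacts[OF x]]]] by auto
    moreover have "Bm x $$ (n,0) = c n x * g k x" "Bm x $$ (n+1,0) = c (n+1) x * g k x"
      using c(2) x by auto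
    moreover have "Bm x $$ (n,1) = - (c n x * f k x)" "Bm x $$ (n+1,1) = - (c (n+1) x * f k x)"
    proof -
      have h1: "- Bm x $$ (n,1) = c n x * f k x" using c(3)[of n x] x by simp
      have h2: "- Bm x $$ (n+1,1) = c (n+1) x * f k x" using c(3)[of "n+1" x] x by simp
      show "Bm x $$ (n,1) = - (c n x * f k x)" using h1 by (metis minus_minus)
      show "Bm x $$ (n+1,1) = - (c (n+1) x * f k x)" using h2 by (metis minus_minus)
    qed
    ultimately show "aa x * g k x = 0" "aa x * f k x = 0" unfolding aa_def by (auto simp: algebra_simps)
  qed
  have aa0: "aa x = 0" if x: "x \<in> V" for x
  proof -
    have "\<exists>w\<in>Reg V. \<forall>x\<in>V. aa x = w x * g k x \<and> 0 = w x * f k x"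
      using syz_k[OF aa_reg reg_const[OF rs VA, of 0]] aa_f by simp
    then obtain w where w: "\<forall>x\<in>V. aa x = w x * g k x" by blast
    have "aa x * aa x = w x * (aa x * g k x)" using w x by (simp add: ac_simps)
    also have "\<dots> = 0" using aa_g[OF x] by simp
    finally show ?thesis by simp
  qed
  have "\<exists>w\<in>Reg V. \<forall>x\<in>V. c (n+1) x = w x * g i x \<and> c n x = w x * f i x"
  proof (rule syz_i)
    show "c (n+1) \<in> Reg V" "c n \<in> Reg V" using c(1) by auto
    show "\<forall>x\<in>V. c (n+1) x * f i x = c n x * g i x"
      using aa0 unfolding aa_def by (auto simp: algebra_simps)
  qed
  then obtain w0 where w0: "w0 \<in> Reg V" "\<And>x. x \<in> V \<Longrightarrow> c (n+1) x = w0 x * g i x"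
    "\<And>x. x \<in> V \<Longrightarrow> c n x = w0 x * f i x" by blast
  define \<beta> where "\<beta> ta = (if ta = t i then w0 else if ta < t i then c (ta - 1) else c (ta - 2))" for ta
  have cB: "Bm x $$ (a, q) = c a x * (if q = 0 then g k x else - f k x)" if "x \<in> V" "a < n+2" "q < 2" for x a q
  proof -
    have h2: "- Bm x $$ (a,1) = c a x * f k x" using c(3)[of a x] that by simp
    have h3: "Bm x $$ (a,1) = - (c a x * f k x)" using h2 by (metis minus_minus)
    have "q = 0 \<or> q = 1" using that by auto
    thus ?thesis using c(2)[of a x] h3 that by auto
  qed
  show "\<exists>\<beta> :: nat \<Rightarrow> 'x \<Rightarrow> 'k.
           (\<forall>ta\<in>{1..r-1}. \<beta> ta \<in> Reg (U i \<inter> U j \<inter> U k)) \<and>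
           (\<forall>x\<in>U i \<inter> U j \<inter> U k.
              (let B = (Q i k x - P i j x * Q j k x - Q i j x * S j k x)
                       @\<^sub>r (S i k x - R i j x * Q j k x - S i j x * S j k x)
               in Z i k x - Z i j x * Z j k x = append_cols (0\<^sub>m r (r - 2)) B \<and>
                  B = ((Delta (r - 1) (t i) * colvec (r - 1) (\<lambda>ta. \<beta> ta x))
                         @\<^sub>r col2 (\<beta> (t i) x * f i x) (\<beta> (t i) x * g i x))
                      * row2 (g k x) (- f k x)))"
  proof (intro exI[of _ \<beta>] conjI ballI)
    fix ta assume ta: "ta \<in> {1..r-1}"
    show "\<beta> ta \<in> Reg (U i \<inter> U j \<inter> U k)"
      using ta rn w0(1) c(1)[of "ta - 1"] c(1)[of "ta - 2"] unfolding \<beta>_def V_def[symmetric] by auto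
  next
    fix x assume x0: "x \<in> U i \<inter> U j \<inter> U k"
    hence x: "x \<in> V" unfolding V_def .
    have D: "Delta (n+1) (t i) \<in> carrier_mat n (n+1)" using Delta_carrier[of "n+1" "t i"] by simp
    have CV: "colvec (n+1) (\<lambda>ta. \<beta> ta x) \<in> carrier_mat (n+1) 1" by (simp add: colvec_def)
    have DC: "Delta (n+1) (t i) * colvec (n+1) (\<lambda>ta. \<beta> ta x) \<in> carrier_mat n 1" using mult_carrier_mat[OF D CV] .
    have C2: "col2 (\<beta> (t i) x * f i x) (\<beta> (t i) x * g i x) \<in> carrier_mat 2 1" by (rule col2_carrier)
    let ?L = "(Delta (n+1) (t i) * colvec (n+1) (\<lambda>ta. \<beta> ta x)) @\<^sub>r col2 (\<beta> (t i) x * f i x) (\<beta> (t i) x * g i x)"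
    have Lc: "?L \<in> carrier_mat (n+2) 1" using carrier_append_rows[OF DC C2] by simp
    have R2: "row2 (g k x) (- f k x) \<in> carrier_mat 1 2" by (simp add: row2_def)
    have Lentry: "?L $$ (a, 0) = c a x" if a: "a < n+2" for a
    proof -
      have "?L $$ (a, 0) = (if a < n then (Delta (n+1) (t i) * colvec (n+1) (\<lambda>ta. \<beta> ta x)) $$ (a, 0)
          else col2 (\<beta> (t i) x * f i x) (\<beta> (t i) x * g i x) $$ (a - n, 0))"
        using append_rows_entry[OF DC C2, of a 0] a by simp
      also have "\<dots> = c a x"
      proof (cases "a < n")
        case True
        have "(Delta (n+1) (t i) * colvec (n+1) (\<lambda>ta. \<beta> ta x)) $$ (a, 0)
            = (\<Sum>l<n+1. Delta (n+1) (t i) $$ (a, l) * colvec (n+1) (\<lambda>ta. \<beta> ta x) $$ (l, 0))"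
          using mult_entry[OF D CV, of a 0] True by simp
        also have "\<dots> = (\<Sum>l<n+1. (if (if a + 1 < t i then a else a + 1) = l then 1 else 0) * \<beta> (l + 1) x)"
          using True by (intro sum.cong refl) (auto simp: Delta_entry colvec_def)
        also have "\<dots> = \<beta> ((if a + 1 < t i then a else a + 1) + 1) x"
          using True by (intro sum_delta_mult) auto
        also have "\<dots> = c a x" unfolding \<beta>_def using True by auto
        finally show ?thesis using True by simp
      next
        case False
        hence "a = n \<or> a = n + 1" using a by auto
        thus ?thesis using False w0(2,3)[OF x] unfolding \<beta>_def by (auto simp: col2_def ac_simps)
      qed
      finally show ?thesis .
    qed
    have Beq: "Bm x = ?L * row2 (g k x) (- f k x)"
    proof (rule eq_matI)
      have Bc: "Bm x \<in> carrier_mat (n+2) 2"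
      proof -
        have xij: "x \<in> U i \<inter> U j" and xjk: "x \<in> U j \<inter> U k" and xik: "x \<in> U i \<inter> U k"
          using x Vsub by auto
        have "Q i k x - P i j x * Q j k x - Q i j x * S j k x \<in> carrier_mat n 2"
             "S i k x - R i j x * Q j k x - S i j x * S j k x \<in> carrier_mat 2 2"
          using blocks[rule_format, OF i j xij] blocks[rule_format, OF j k xjk]
            blocks[rule_format, OF i k xik] rn by auto
        thus ?thesis unfolding Bm_def by (rule carrier_append_rows)
      qed
      show "dim_row (Bm x) = dim_row (?L * row2 (g k x) (- f k x))" using Bc Lc by simp
      show "dim_col (Bm x) = dim_col (?L * row2 (g k x) (- f k x))" using Bc R2 by simp
      fix a q assume a: "a < dim_row (?L * row2 (g k x) (- f k x))" and q: "q < dim_col (?L * row2 (g k x) (- f k x))"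
      have a': "a < n+2" and q': "q < 2" using a q Lc R2 by auto
      have "(?L * row2 (g k x) (- f k x)) $$ (a, q) = (\<Sum>l<1. ?L $$ (a, l) * row2 (g k x) (- f k x) $$ (l, q))"
        using mult_entry[OF Lc R2 a' q'] .
      also have "\<dots> = c a x * (if q = 0 then g k x else - f k x)"
        using Lentry[OF a'] q' by (simp add: row2_def)
      finally show "Bm x $$ (a, q) = (?L * row2 (g k x) (- f k x)) $$ (a, q)"
        using cB[OF x a' q'] by simp
    qed
    show "let B = (Q i k x - P i j x * Q j k x - Q i j x * S j k x)
                       @\<^sub>r (S i k x - R i j x * Q j k x - S i j x * S j k x)
               in Z i k x - Z i j x * Z j k x = append_cols (0\<^sub>m r (r - 2)) B \<and>
                  B = ((Delta (r - 1) (t i) * colvec (r - 1) (\<lambda>ta. \<beta> ta x))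
                         @\<^sub>r col2 (\<beta> (t i) x * f i x) (\<beta> (t i) x * g i x))
                      * row2 (g k x) (- f k x)"
      unfolding Let_def Bm_def[symmetric] using xfacts[OF x] Beq rn by simp
  qed
qed

end
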